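(* Let $s,t\in\Sigma^n$ and let $d:\Sigma^n\to\Sigma$ be a depth assignment such that $d_s=d_t$, or $s$ and $t$ share at least one symbol. Then \[D\left(P\left(H(s)+e_{d_s}\right)-P\left(H(t)+e_{d_t}\right)\right)\le n.\]
   Context: Let $k\ge 1$ be an integer, $\Sigma=\{0,1,\dots,k-1\}$, $n\ge 1$. A depth assignment is any function $d:\Sigma^n\to\Sigma$, written $s\mapsto d_s$. The histogram $H(s):\Sigma\to\mathbb{Z}$ of a string $s$ gives the number of occurrences of each symbol in $s$; $e_b$ is the indicator function of $b\in\Sigma$. For $H:\Sigma\to\mathbb{Z}$, the partial sum is $P(H)(i)=\sum_{j=0}^{i}H(j)$ and the difference is $D(H)=\max_{i,j\in\Sigma}(H(i)-H(j))$. "Share a symbol" means some $c\in\Sigma$ occurs in both $s$ and $t$. *)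

theory Defs
  imports Main
begin

definition strings :: "nat \<Rightarrow> nat \<Rightarrow> nat list set" where
  "strings k n = {s. length s = n \<and> set s \<subseteq> {0..<k}}"

definition depth_assignment :: "nat \<Rightarrow> nat \<Rightarrow> (nat list \<Rightarrow> nat) \<Rightarrow> bool" where
  "depth_assignment k n d \<longleftrightarrow> (\<forall>s \<in> strings k n. d s \<in> {0..<k})"

definition hist :: "nat list \<Rightarrow> nat \<Rightarrow> int" where
  "hist s b = int (count_list s b)"

definition ind :: "nat \<Rightarrow> nat \<Rightarrow> int" where
  "ind b = (\<lambda>i. if i = b then 1 else 0)"

definition psum :: "(nat \<Rightarrow> int) \<Rightarrow> nat \<Rightarrow> int" where
  "psum H i = (\<Sum>j\<le>i. H j)"

definition diff :: "nat \<Rightarrow> (nat \<Rightarrow> int) \<Rightarrow> int" where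
  "diff k H = Max {H i - H j | i j. i < k \<and> j < k}"

end

theory Submission
  imports Defs
begin

lemma core:
  fixes gs gt :: "nat \<Rightarrow> int" and K :: "nat set"
  assumes fin: "finite K" and I: "I \<subseteq> K"
    and nns: "\<And>x. gs x \<ge> 0" and nnt: "\<And>x. gt x \<ge> 0"
    and ts: "sum gs K = N + 1" and tt: "sum gt K = N + 1"
    and sh: "\<exists>x\<in>K. gs x \<ge> 1 \<and> gt x \<ge> 1"
  shows "sum gt I - sum gs I \<le> N"
proof -
  have finI: "finite I" using fin I finite_subset by blast
  have splt: "sum gt K = sum gt I + sum gt (K - I)"
    using sum.subset_diff[OF I fin] by (simp add: add.commute)
  have spls: "sum gs K = sum gs I + sum gs (K - I)"
    using sum.subset_diff[OF I fin] by (simp add: add.commute)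
  have a: "sum gs (K - I) \<ge> 0" "sum gt (K - I) \<ge> 0" "sum gs I \<ge> 0"
    using nns nnt by (auto intro: sum_nonneg)
  obtain x where x: "x \<in> K" "gs x \<ge> 1" "gt x \<ge> 1" using sh by blast
  show ?thesis
  proof (cases "x \<in> I")
    case True
    have "gs x \<le> sum gs I" using member_le_sum[OF True] nns finI by auto
    then show ?thesis using splt tt a x by linarith
  next
    case False
    have "gt x \<le> sum gt (K - I)" using x False nnt fin
      by (intro member_le_sum) auto
    then show ?thesis using splt tt a x by linarith
  qed
qed

lemma psum_split:
  assumes "i \<le> j"
  shows "psum g j = psum g i + sum g {i<..j}"
proof -
  have "{..j} = {..i} \<union> {i<..j}" using assms by auto
  then show ?thesis unfolding psum_def
    by (simp add: sum.union_disjoint ivl_disj_int)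
qed

lemma total:
  assumes "s \<in> strings k n" "b < k" "k \<ge> 1"
  shows "sum (\<lambda>j. hist s j + ind b j) {..<k} = int n + 1"
proof -
  have "sum (count_list s) {..<k} = length s"
    using assms(1) by (intro sum_count_set) (auto simp: strings_def)
  then have "sum (hist s) {..<k} = int n"
    using assms(1) by (simp add: hist_def strings_def flip: of_nat_sum)
  moreover have "sum (ind b) {..<k} = 1" using assms(2)
    by (simp add: ind_def)
  ultimately show ?thesis by (simp add: sum.distrib)
qed

theorem lemma8:
  fixes k n :: nat and d :: "nat list \<Rightarrow> nat" and s t :: "nat list"
  assumes "k \<ge> 1" and "n \<ge> 1"
    and "depth_assignment k n d"
    and "s \<in> strings k n" and "t \<in> strings k n"
    and "d s = d t \<or> (\<exists>c. c \<in> set s \<and> c \<in> set t)"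
  shows "diff k (\<lambda>i. psum (\<lambda>j. hist s j + ind (d s) j) i
                   - psum (\<lambda>j. hist t j + ind (d t) j) i) \<le> int n"
proof -
  define gs where "gs = (\<lambda>j. hist s j + ind (d s) j)"
  define gt where "gt = (\<lambda>j. hist t j + ind (d t) j)"
  have ds: "d s < k" and dt: "d t < k" using assms(3,4,5) by (auto simp: depth_assignment_def)
  have nns: "\<And>x. gs x \<ge> 0" and nnt: "\<And>x. gt x \<ge> 0"
    by (auto simp: gs_def gt_def hist_def ind_def)
  have ts: "sum gs {..<k} = int n + 1" unfolding gs_def using total assms ds by blast
  have tt: "sum gt {..<k} = int n + 1" unfolding gt_def using total assms dt by blast
  have sh: "\<exists>x\<in>{..<k}. gs x \<ge> 1 \<and> gt x \<ge> 1"
    using assms(6)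
  proof
    assume "d s = d t"
    then show ?thesis using ds nns nnt
      by (intro bexI[of _ "d s"]) (auto simp: gs_def gt_def ind_def hist_def)
  next
    assume "\<exists>c. c \<in> set s \<and> c \<in> set t"
    then obtain c where c: "c \<in> set s" "c \<in> set t" by blast
    have "c < k" using c assms(4) by (auto simp: strings_def)
    moreover have "count_list s c \<ge> 1" "count_list t c \<ge> 1" using c
      by (metis count_list_0_iff less_one not_le)+
    ultimately show ?thesis
      by (intro bexI[of _ c]) (auto simp: gs_def gt_def ind_def hist_def)
  qed
  have sh': "\<exists>x\<in>{..<k}. gt x \<ge> 1 \<and> gs x \<ge> 1" using sh by blast
  let ?F = "\<lambda>i. psum gs i - psum gt i"
  have key: "?F i - ?F j \<le> int n" if "i < k" "j < k" for i j
  proof (cases "i \<le> j")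
    case True
    have I: "{i<..j} \<subseteq> {..<k}" using that by auto
    have "sum gt {i<..j} - sum gs {i<..j} \<le> int n"
      using core[OF _ I nns nnt ts tt sh] by simp
    then show ?thesis using psum_split[OF True, of gs] psum_split[OF True, of gt] by linarith
  next
    case False
    then have F: "j \<le> i" by simp
    have I: "{j<..i} \<subseteq> {..<k}" using that by auto
    have "sum gs {j<..i} - sum gt {j<..i} \<le> int n"
      using core[OF _ I nnt nns tt ts sh'] by simp
    then show ?thesis using psum_split[OF F, of gs] psum_split[OF F, of gt] by linarith
  qed
  have fin: "finite {?F i - ?F j | i j. i < k \<and> j < k}"
  proof -
    have "{?F i - ?F j | i j. i < k \<and> j < k} = (\<lambda>(i,j). ?F i - ?F j) ` ({..<k} \<times> {..<k})"
      by auto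
    then show ?thesis by simp
  qed
  have ne: "{?F i - ?F j | i j. i < k \<and> j < k} \<noteq> {}" using assms(1) by fastforce
  have "Max {?F i - ?F j | i j. i < k \<and> j < k} \<le> int n"
    using fin ne key by (subst Max_le_iff) auto
  then show ?thesis unfolding diff_def gs_def gt_def .
qed

end
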